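(* Let $\{\boldsymbol y^{TSLP}_n\}_{n\in\mathcal T}$, $\{u^{TSLP}_n\}_{n\in\mathcal T\setminus\{1\}}$ be the values of the $\boldsymbol y$- and $u$-variables in an optimal solution of the linear programming relaxation of the two-stage model (integrality of $\boldsymbol x$ dropped). Define $\boldsymbol x^{MS}_1=\lceil\boldsymbol B_{t_1}\boldsymbol y^{TSLP}_1\rceil$, $\boldsymbol x^{MS}_n=\max_{m\in\mathcal P(n)}\lceil\boldsymbol B_{t_m}\boldsymbol y^{TSLP}_m\rceil-\max_{m\in\mathcal P(a(n))}\lceil\boldsymbol B_{t_m}\boldsymbol y^{TSLP}_m\rceil$ ($n\ne1$), $\eta^{MS}_n=\max_{m\in\mathcal C(n)}\{\boldsymbol f_{t_m}^{\mathsf T}\sum_{l\in\mathcal P(m)}\boldsymbol x^{MS}_l+\boldsymbol c_{t_m}^{\mathsf T}\boldsymbol y^{TSLP}_m-u^{TSLP}_m\}$ ($n\notin\mathcal L$), $\boldsymbol x^{TS}_1=\boldsymbol B_{t_1}\boldsymbol y^{TSLP}_1$, $\boldsymbol x^{TS}_n=\max_{m\in\mathcal P(n)}\max_{l\in\mathcal T_{t_m}}\boldsymbol B_{t_l}\boldsymbol y^{TSLP}_l-\max_{m\in\mathcal P(a(n))}\max_{l\in\mathcal T_{t_m}}\boldsymbol B_{t_l}\boldsymbol y^{TSLP}_l$ ($n\ne1$), $\eta^{TS}_n=\max_{m\in\mathcal C(n)}\{\boldsymbol f_{t_m}^{\mathsf T}\sum_{l\in\mathcal P(m)}\boldsymbol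 x^{TS}_l+\boldsymbol c_{t_m}^{\mathsf T}\boldsymbol y^{TSLP}_m-u^{TSLP}_m\}$ ($n\notin\mathcal L$). Then $$\mathrm{VMS}_R\ge\mathrm{VMS}_R^{LB1}:=\boldsymbol f_{t_1}^{\mathsf T}\big(\boldsymbol B_{t_1}\boldsymbol y^{TSLP}_1-\lceil\boldsymbol B_{t_1}\boldsymbol y^{TSLP}_1\rceil\big)+\sum_{n\in\mathcal T\setminus\{1\}}p_n(1-\lambda_{t_n})\boldsymbol f_{t_n}^{\mathsf T}\Big(\max_{m\in\mathcal P(n)}\max_{l\in\mathcal T_{t_m}}\boldsymbol B_{t_l}\boldsymbol y^{TSLP}_l-\max_{m\in\mathcal P(n)}\lceil\boldsymbol B_{t_m}\boldsymbol y^{TSLP}_m\rceil\Big)+\sum_{n\in\mathcal T\setminus\mathcal L}p_n\lambda_{t_n+1}\big(\eta^{TS}_n-\eta^{MS}_n\big).$$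
   Context: Setting. Fix integers $T\ge 2$ (periods), $M\ge1$ (facilities), $N\ge1$ (customer sites). For each period $t$: maintenance costs $f_{ti}\ge 0$ forming $\boldsymbol f_t\in\mathbb R^M$; operational costs $c_{tij}\ge0$ forming $\boldsymbol c_t\in\mathbb R^{MN}$; capacities $h_{ti}>0$. Vectors $\boldsymbol y\in\mathbb R^{MN}$ are indexed by pairs $(i,j)$; $(\boldsymbol A_t\boldsymbol y)_j=\sum_{i=1}^M y_{ij}$ defines $\boldsymbol A_t$ and $(\boldsymbol B_t\boldsymbol y)_i=\frac1{h_{ti}}\sum_{j=1}^N y_{ij}$ defines $\boldsymbol B_t$. Ceilings and maxima of vectors are componentwise. Scenario tree: a finite rooted tree with node set $\mathcal T$, root $1$, all root-to-leaf paths having $T$ nodes; $\mathcal T_t$ nodes at depth $t$, $t_n$ the period of $n$, $\mathcal L=\mathcal T_T$ the leaves, $a(n)$ the parent of $n\ne1$, $\mathcal C(n)$ the children of $n$, $\mathcal P(n)$ the nodes on the root-to-$n$ path (inclusive). Probabilities $p_n>0$ with $\sum_{n\in\mathcal T_t}p_n=1$ and $\sum_{m\in\mathcal C(n)}p_m=p_n$ ($n\notin\mathcal L$); demands $\boldsymbol d_n\in\mathbb R^N_{\ge0}$. Risk parameters $\lambda_t\in[0,1]$, $\alpha_t\in(0,1)$, $t=2,\ldots,T$. $\tilde{\boldsymbol f}_n=\boldsymbol f_{t_n}$ if $n=1$, else $(1-\lambda_{t_n})\boldsymbol f_{t_n}$; $\tilde{\boldsymbol c}_n=\boldsymbol c_{t_n}$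 if $n=1$, else $(1-\lambda_{t_n})\boldsymbol c_{t_n}$; $\tilde\lambda_n=0$ if $n\in\mathcal L$, else $\lambda_{t_n+1}$; $\tilde\alpha_n=0$ if $n=1$, else $\lambda_{t_n}/(1-\alpha_{t_n})$. Multistage model: $z^{MS}_R=\min\sum_{n\in\mathcal T}p_n\big(\tilde{\boldsymbol f}_n^{\mathsf T}\sum_{m\in\mathcal P(n)}\boldsymbol x_m+\tilde{\boldsymbol c}_n^{\mathsf T}\boldsymbol y_n+\tilde\lambda_n\eta_n+\tilde\alpha_nu_n\big)$ over $\boldsymbol x_n\in\mathbb Z^M_+$, $\boldsymbol y_n\in\mathbb R^{MN}_+$ ($n\in\mathcal T$), $\eta_n\in\mathbb R$ ($n\notin\mathcal L$), $u_n\ge0$ ($n\ne1$), subject to $\boldsymbol A_{t_n}\boldsymbol y_n=\boldsymbol d_n$, $\boldsymbol B_{t_n}\boldsymbol y_n\le\sum_{m\in\mathcal P(n)}\boldsymbol x_m$ ($n\in\mathcal T$) and $u_n+\eta_{a(n)}\ge\boldsymbol f_{t_n}^{\mathsf T}\sum_{m\in\mathcal P(n)}\boldsymbol x_m+\boldsymbol c_{t_n}^{\mathsf T}\boldsymbol y_n$ ($n\ne1$). Two-stage model: the multistage model plus the constraints $\boldsymbol x_m=\boldsymbol x_n$ for all $m,n\in\mathcal T_t$, $t=1,\ldots,T$; optimal value $z^{TS}_R$. $\mathrm{VMS}_R:=z^{TS}_R-z^{MS}_R$. *)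

theory Defs
  imports Main "HOL-Library.Extended_Real"
begin

text \<open>Facilities are indexed by i < nF, customer sites by j < nC (0-based);
  periods are 1..Tp. Scenario tree nodes are elements of the set nodes, with root,
  parent function par and period (depth) function per.\<close>

record 'v fl_data =
  Tp    :: nat
  nF    :: nat
  nC    :: nat
  fcost :: "nat \<Rightarrow> nat \<Rightarrow> real"
  ccost :: "nat \<Rightarrow> nat \<Rightarrow> nat \<Rightarrow> real"
  cap   :: "nat \<Rightarrow> nat \<Rightarrow> real"
  nodes :: "'v set"
  root  :: 'v
  par   :: "'v \<Rightarrow> 'v"
  per   :: "'v \<Rightarrow> nat"
  pr    :: "'v \<Rightarrow> real"
  dem   :: "'v \<Rightarrow> nat \<Rightarrow> real"
  lam   :: "nat \<Rightarrow> real"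
  alp   :: "nat \<Rightarrow> real"

definition Fac :: "'v fl_data \<Rightarrow> nat set" where "Fac D = {..<nF D}"
definition Cus :: "'v fl_data \<Rightarrow> nat set" where "Cus D = {..<nC D}"

definition level :: "'v fl_data \<Rightarrow> nat \<Rightarrow> 'v set" where
  "level D t = {n \<in> nodes D. per D n = t}"

definition leaves :: "'v fl_data \<Rightarrow> 'v set" where
  "leaves D = level D (Tp D)"

definition children :: "'v fl_data \<Rightarrow> 'v \<Rightarrow> 'v set" where
  "children D n = {m \<in> nodes D. m \<noteq> root D \<and> par D m = n}"

definition path :: "'v fl_data \<Rightarrow> 'v \<Rightarrow> 'v set" where
  "path D n = {(par D ^^ k) n | k. k < per D n}"

definition valid_data :: "'v fl_data \<Rightarrow> bool" where
  "valid_data D \<longleftrightarrow>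
     Tp D \<ge> 2 \<and> nF D \<ge> 1 \<and> nC D \<ge> 1 \<and>
     (\<forall>t\<in>{1..Tp D}. \<forall>i\<in>Fac D. fcost D t i \<ge> 0 \<and> cap D t i > 0 \<and>
                         (\<forall>j\<in>Cus D. ccost D t i j \<ge> 0)) \<and>
     finite (nodes D) \<and> root D \<in> nodes D \<and> per D (root D) = 1 \<and>
     (\<forall>n\<in>nodes D. 1 \<le> per D n \<and> per D n \<le> Tp D) \<and>
     (\<forall>n\<in>nodes D. n \<noteq> root D \<longrightarrow> par D n \<in> nodes D \<and> per D n = per D (par D n) + 1) \<and>
     (\<forall>n\<in>nodes D. per D n < Tp D \<longrightarrow> children D n \<noteq> {}) \<and>
     (\<forall>n\<in>nodes D. pr D n > 0) \<and>
     (\<forall>t\<in>{1..Tp D}. (\<Sum>n\<in>level D t. pr D n) = 1) \<and>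
     (\<forall>n\<in>nodes D. per D n < Tp D \<longrightarrow> (\<Sum>m\<in>children D n. pr D m) = pr D n) \<and>
     (\<forall>n\<in>nodes D. \<forall>j\<in>Cus D. dem D n j \<ge> 0) \<and>
     (\<forall>t\<in>{2..Tp D}. 0 \<le> lam D t \<and> lam D t \<le> 1 \<and> 0 < alp D t \<and> alp D t < 1)"

definition cumx :: "'v fl_data \<Rightarrow> ('v \<Rightarrow> nat \<Rightarrow> real) \<Rightarrow> 'v \<Rightarrow> nat \<Rightarrow> real" where
  "cumx D x n i = (\<Sum>m\<in>path D n. x m i)"

text \<open>(B_t y)_i for the y-vector at node n, with t = t_n.\<close>
definition BY :: "'v fl_data \<Rightarrow> ('v \<Rightarrow> nat \<Rightarrow> nat \<Rightarrow> real) \<Rightarrow> 'v \<Rightarrow> nat \<Rightarrow> real" where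
  "BY D y n i = (1 / cap D (per D n) i) * (\<Sum>j\<in>Cus D. y n i j)"

definition ftil :: "'v fl_data \<Rightarrow> 'v \<Rightarrow> nat \<Rightarrow> real" where
  "ftil D n i = (if n = root D then 1 else 1 - lam D (per D n)) * fcost D (per D n) i"

definition ctil :: "'v fl_data \<Rightarrow> 'v \<Rightarrow> nat \<Rightarrow> nat \<Rightarrow> real" where
  "ctil D n i j = (if n = root D then 1 else 1 - lam D (per D n)) * ccost D (per D n) i j"

definition lamtil :: "'v fl_data \<Rightarrow> 'v \<Rightarrow> real" where
  "lamtil D n = (if per D n = Tp D then 0 else lam D (per D n + 1))"

definition alptil :: "'v fl_data \<Rightarrow> 'v \<Rightarrow> real" where
  "alptil D n = (if n = root D then 0 else lam D (per D n) / (1 - alp D (per D n)))"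

text \<open>Objective. (eta at leaves and u at the root are dummy values with zero coefficient
  and not constrained.)\<close>
definition obj :: "'v fl_data \<Rightarrow> ('v \<Rightarrow> nat \<Rightarrow> real) \<Rightarrow> ('v \<Rightarrow> nat \<Rightarrow> nat \<Rightarrow> real)
                    \<Rightarrow> ('v \<Rightarrow> real) \<Rightarrow> ('v \<Rightarrow> real) \<Rightarrow> real" where
  "obj D x y eta u = (\<Sum>n\<in>nodes D. pr D n *
      ((\<Sum>i\<in>Fac D. ftil D n i * cumx D x n i)
       + (\<Sum>i\<in>Fac D. \<Sum>j\<in>Cus D. ctil D n i j * y n i j)
       + lamtil D n * eta n + alptil D n * u n))"

text \<open>Feasibility; integral = integrality of x required, ts = two-stage
  (nonanticipativity across whole periods) constraints added.\<close>
definition feasible :: "'v fl_data \<Rightarrow> bool \<Rightarrow> bool \<Rightarrow> ('v \<Rightarrow> nat \<Rightarrow> real)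
     \<Rightarrow> ('v \<Rightarrow> nat \<Rightarrow> nat \<Rightarrow> real) \<Rightarrow> ('v \<Rightarrow> real) \<Rightarrow> ('v \<Rightarrow> real) \<Rightarrow> bool" where
  "feasible D integral ts x y eta u \<longleftrightarrow>
     (\<forall>n\<in>nodes D. \<forall>i\<in>Fac D. 0 \<le> x n i \<and> (integral \<longrightarrow> x n i \<in> \<int>)) \<and>
     (\<forall>n\<in>nodes D. \<forall>i\<in>Fac D. \<forall>j\<in>Cus D. 0 \<le> y n i j) \<and>
     (\<forall>n\<in>nodes D. n \<noteq> root D \<longrightarrow> 0 \<le> u n) \<and>
     (\<forall>n\<in>nodes D. \<forall>j\<in>Cus D. (\<Sum>i\<in>Fac D. y n i j) = dem D n j) \<and>
     (\<forall>n\<in>nodes D. \<forall>i\<in>Fac D. BY D y n i \<le> cumx D x n i) \<and>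
     (\<forall>n\<in>nodes D. n \<noteq> root D \<longrightarrow>
        u n + eta (par D n) \<ge> (\<Sum>i\<in>Fac D. fcost D (per D n) i * cumx D x n i)
                              + (\<Sum>i\<in>Fac D. \<Sum>j\<in>Cus D. ccost D (per D n) i j * y n i j)) \<and>
     (ts \<longrightarrow> (\<forall>m\<in>nodes D. \<forall>n\<in>nodes D. per D m = per D n \<longrightarrow> (\<forall>i\<in>Fac D. x m i = x n i)))"

definition zMS :: "'v fl_data \<Rightarrow> real" where
  "zMS D = Inf {obj D x y eta u | x y eta u. feasible D True False x y eta u}"

definition zTS :: "'v fl_data \<Rightarrow> real" where
  "zTS D = Inf {obj D x y eta u | x y eta u. feasible D True True x y eta u}"

definition VMS :: "'v fl_data \<Rightarrow> real" where
  "VMS D = zTS D - zMS D"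

definition ceilBY :: "'v fl_data \<Rightarrow> ('v \<Rightarrow> nat \<Rightarrow> nat \<Rightarrow> real) \<Rightarrow> 'v \<Rightarrow> nat \<Rightarrow> real" where
  "ceilBY D y n i = real_of_int \<lceil>BY D y n i\<rceil>"

definition maxceil :: "'v fl_data \<Rightarrow> ('v \<Rightarrow> nat \<Rightarrow> nat \<Rightarrow> real) \<Rightarrow> 'v \<Rightarrow> nat \<Rightarrow> real" where
  "maxceil D y n i = Max ((\<lambda>m. ceilBY D y m i) ` path D n)"

definition maxlev :: "'v fl_data \<Rightarrow> ('v \<Rightarrow> nat \<Rightarrow> nat \<Rightarrow> real) \<Rightarrow> 'v \<Rightarrow> nat \<Rightarrow> real" where
  "maxlev D y n i = Max ((\<lambda>m. Max ((\<lambda>l. BY D y l i) ` level D (per D m))) ` path D n)"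

definition xMS :: "'v fl_data \<Rightarrow> ('v \<Rightarrow> nat \<Rightarrow> nat \<Rightarrow> real) \<Rightarrow> 'v \<Rightarrow> nat \<Rightarrow> real" where
  "xMS D y n i = (if n = root D then ceilBY D y (root D) i
                  else maxceil D y n i - maxceil D y (par D n) i)"

definition xTS :: "'v fl_data \<Rightarrow> ('v \<Rightarrow> nat \<Rightarrow> nat \<Rightarrow> real) \<Rightarrow> 'v \<Rightarrow> nat \<Rightarrow> real" where
  "xTS D y n i = (if n = root D then BY D y (root D) i
                  else maxlev D y n i - maxlev D y (par D n) i)"

definition etaOf :: "'v fl_data \<Rightarrow> ('v \<Rightarrow> nat \<Rightarrow> real) \<Rightarrow> ('v \<Rightarrow> nat \<Rightarrow> nat \<Rightarrow> real)
                      \<Rightarrow> ('v \<Rightarrow> real) \<Rightarrow> 'v \<Rightarrow> real" where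
  "etaOf D x y u n = Max ((\<lambda>m. (\<Sum>i\<in>Fac D. fcost D (per D m) i * (\<Sum>l\<in>path D m. x l i))
                              + (\<Sum>i\<in>Fac D. \<Sum>j\<in>Cus D. ccost D (per D m) i j * y m i j)
                              - u m) ` children D n)"

definition etaMS where "etaMS D y u n = etaOf D (xMS D y) y u n"
definition etaTS where "etaTS D y u n = etaOf D (xTS D y) y u n"

definition LB1 :: "'v fl_data \<Rightarrow> ('v \<Rightarrow> nat \<Rightarrow> nat \<Rightarrow> real) \<Rightarrow> ('v \<Rightarrow> real) \<Rightarrow> real" where
  "LB1 D y u =
     (\<Sum>i\<in>Fac D. fcost D (per D (root D)) i * (BY D y (root D) i - ceilBY D y (root D) i))
   + (\<Sum>n\<in>nodes D - {root D}. pr D n * (1 - lam D (per D n)) *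
        (\<Sum>i\<in>Fac D. fcost D (per D n) i * (maxlev D y n i - maxceil D y n i)))
   + (\<Sum>n\<in>nodes D - leaves D. pr D n * lam D (per D n + 1) * (etaTS D y u n - etaMS D y u n))"

end

theory Submission
  imports Defs
begin


lemma vd_facts:
  assumes "valid_data D"
  shows "finite (nodes D)" "root D \<in> nodes D" "per D (root D) = 1"
    "\<And>n. n \<in> nodes D \<Longrightarrow> 1 \<le> per D n \<and> per D n \<le> Tp D"
    "\<And>n. n \<in> nodes D \<Longrightarrow> n \<noteq> root D \<Longrightarrow> par D n \<in> nodes D \<and> per D n = per D (par D n) + 1"
    "\<And>n. n \<in> nodes D \<Longrightarrow> per D n < Tp D \<Longrightarrow> children D n \<noteq> {}"
    "\<And>n. n \<in> nodes D \<Longrightarrow> pr D n > 0"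
    "\<And>t. t \<in> {1..Tp D} \<Longrightarrow> (\<Sum>n\<in>level D t. pr D n) = 1"
    "\<And>n. n \<in> nodes D \<Longrightarrow> per D n < Tp D \<Longrightarrow> (\<Sum>m\<in>children D n. pr D m) = pr D n"
    "\<And>t i. t \<in> {1..Tp D} \<Longrightarrow> i \<in> Fac D \<Longrightarrow> fcost D t i \<ge> 0"
    "\<And>t i. t \<in> {1..Tp D} \<Longrightarrow> i \<in> Fac D \<Longrightarrow> cap D t i > 0"
    "\<And>t i j. t \<in> {1..Tp D} \<Longrightarrow> i \<in> Fac D \<Longrightarrow> j \<in> Cus D \<Longrightarrow> ccost D t i j \<ge> 0"
    "\<And>t. t \<in> {2..Tp D} \<Longrightarrow> 0 \<le> lam D t \<and> lam D t \<le> 1 \<and> 0 < alp D t \<and> alp D t < 1"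
    "Tp D \<ge> 2"
  using assms unfolding valid_data_def by auto

lemma par_pow:
  assumes "valid_data D" "m \<in> nodes D"
  shows "k < per D m \<Longrightarrow> (par D ^^ k) m \<in> nodes D \<and> per D ((par D ^^ k) m) = per D m - k"
proof (induction k)
  case 0
  then show ?case using assms by simp
next
  case (Suc k)
  let ?z = "(par D ^^ k) m"
  have z: "?z \<in> nodes D" "per D ?z = per D m - k" using Suc by auto
  have "?z \<noteq> root D" using z Suc.prems vd_facts(3)[OF assms(1)] by auto
  then show ?case using z vd_facts(5)[OF assms(1) z(1)] by auto
qed

lemma root_unique:
  assumes "valid_data D" "n \<in> nodes D" "per D n = 1" shows "n = root D"
proof (rule ccontr)
  assume "n \<noteq> root D"
  then have "par D n \<in> nodes D" "per D n = per D (par D n) + 1" using vd_facts(5)[OF assms(1,2)] by auto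
  then show False using vd_facts(4)[OF assms(1)] assms(3) by fastforce
qed

lemma path_img: "path D n = (\<lambda>k. (par D ^^ k) n) ` {..<per D n}"
  unfolding path_def by auto

lemma finite_path: "finite (path D n)"
  unfolding path_img by simp

lemma path_sub: assumes "valid_data D" "n \<in> nodes D" shows "path D n \<subseteq> nodes D"
  unfolding path_img using par_pow[OF assms] by auto

lemma path_per: assumes "valid_data D" "n \<in> nodes D" "m \<in> path D n" shows "per D m \<le> per D n"
  using assms(3) unfolding path_img using par_pow[OF assms(1,2)] by auto

lemma in_path: assumes "valid_data D" "n \<in> nodes D" shows "n \<in> path D n"
proof -
  have "0 < per D n" using vd_facts(4)[OF assms] by auto
  then show ?thesis unfolding path_def by force
qed

lemma path_root: assumes "valid_data D" shows "path D (root D) = {root D}"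
  unfolding path_def using vd_facts(3)[OF assms] by auto

lemma path_par: assumes "valid_data D" "n \<in> nodes D" "n \<noteq> root D"
  shows "path D n = insert n (path D (par D n))"
proof -
  have pn: "per D n = per D (par D n) + 1" using vd_facts(5)[OF assms] by auto
  show ?thesis
  proof (intro equalityI subsetI)
    fix z assume "z \<in> path D n"
    then obtain k where k: "k < per D n" "z = (par D ^^ k) n" unfolding path_def by auto
    show "z \<in> insert n (path D (par D n))"
    proof (cases k)
      case 0 then show ?thesis using k by simp
    next
      case (Suc j)
      have e: "(par D ^^ Suc j) n = (par D ^^ j) (par D n)" by (simp only: funpow_Suc_right o_apply)
      have "z = (par D ^^ j) (par D n)" using k Suc e by simp
      moreover have "j < per D (par D n)" using k Suc pn by simp
      ultimately show ?thesis unfolding path_def by auto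
    qed
  next
    fix z assume "z \<in> insert n (path D (par D n))"
    then show "z \<in> path D n"
    proof
      assume "z = n" then show ?thesis using in_path[OF assms(1,2)] by simp
    next
      assume "z \<in> path D (par D n)"
      then obtain j where j: "j < per D (par D n)" "z = (par D ^^ j) (par D n)" unfolding path_def by auto
      have e: "(par D ^^ Suc j) n = (par D ^^ j) (par D n)" by (simp only: funpow_Suc_right o_apply)
      then have "z = (par D ^^ Suc j) n" using j by simp
      moreover have "Suc j < per D n" using j pn by simp
      ultimately show ?thesis unfolding path_def by blast
    qed
  qed
qed

lemma notin_path_par: assumes "valid_data D" "n \<in> nodes D" "n \<noteq> root D"
  shows "n \<notin> path D (par D n)"
proof
  assume "n \<in> path D (par D n)"
  then have "per D n \<le> per D (par D n)" using path_per[OF assms(1)] vd_facts(5)[OF assms] by blast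
  then show False using vd_facts(5)[OF assms] by simp
qed

lemma tree_induct:
  assumes "valid_data D" "n \<in> nodes D" "P (root D)"
    "\<And>n. n \<in> nodes D \<Longrightarrow> n \<noteq> root D \<Longrightarrow> P (par D n) \<Longrightarrow> P n"
  shows "P n"
  using assms(2)
proof (induction "per D n" arbitrary: n rule: less_induct)
  case less
  show ?case
  proof (cases "n = root D")
    case True then show ?thesis using assms(3) by simp
  next
    case False
    then have "par D n \<in> nodes D" "per D (par D n) < per D n" using vd_facts(5)[OF assms(1) less.prems] by auto
    then show ?thesis using less False assms(4) by blast
  qed
qed

lemma cumx_par: assumes "valid_data D" "n \<in> nodes D" "n \<noteq> root D"
  shows "cumx D x n i = x n i + cumx D x (par D n) i"
  unfolding cumx_def path_par[OF assms] using notin_path_par[OF assms] sum.insert[OF finite_path] by simp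

lemma cumx_root: assumes "valid_data D" shows "cumx D x (root D) i = x (root D) i"
  unfolding cumx_def path_root[OF assms] by simp

lemma cumx_tel: assumes "valid_data D" "n \<in> nodes D"
  shows "cumx D (\<lambda>n i. if n = root D then H (root D) i else H n i - H (par D n) i) n i = H n i"
proof (rule tree_induct[OF assms])
  show "cumx D (\<lambda>n i. if n = root D then H (root D) i else H n i - H (par D n) i) (root D) i = H (root D) i"
    using cumx_root[OF assms(1)] by simp
next
  fix n assume "n \<in> nodes D" "n \<noteq> root D"
    "cumx D (\<lambda>n i. if n = root D then H (root D) i else H n i - H (par D n) i) (par D n) i = H (par D n) i"
  then show "cumx D (\<lambda>n i. if n = root D then H (root D) i else H n i - H (par D n) i) n i = H n i"
    using cumx_par[OF assms(1)] by simp
qed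



lemma level_root: assumes "valid_data D" shows "level D 1 = {root D}"
proof
  show "level D 1 \<subseteq> {root D}" unfolding level_def using root_unique[OF assms] by blast
  show "{root D} \<subseteq> level D 1" unfolding level_def using vd_facts(2,3)[OF assms] by simp
qed

lemma maxceil_root: assumes "valid_data D" shows "maxceil D y (root D) i = ceilBY D y (root D) i"
  unfolding maxceil_def path_root[OF assms] by simp

lemma maxlev_root: assumes "valid_data D" shows "maxlev D y (root D) i = BY D y (root D) i"
proof -
  have "level D (per D (root D)) = {root D}" using level_root[OF assms] vd_facts(3)[OF assms] by simp
  then show ?thesis unfolding maxlev_def path_root[OF assms] by simp
qed

lemma xMS_eq: assumes "valid_data D"
  shows "xMS D y = (\<lambda>n i. if n = root D then maxceil D y (root D) i else maxceil D y n i - maxceil D y (par D n) i)"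
  unfolding xMS_def using maxceil_root[OF assms] by (intro ext) simp

lemma xTS_eq: assumes "valid_data D"
  shows "xTS D y = (\<lambda>n i. if n = root D then maxlev D y (root D) i else maxlev D y n i - maxlev D y (par D n) i)"
  unfolding xTS_def using maxlev_root[OF assms] by (intro ext) simp

lemma cumx_xMS: assumes "valid_data D" "n \<in> nodes D" shows "cumx D (xMS D y) n i = maxceil D y n i"
  unfolding xMS_eq[OF assms(1)] by (rule cumx_tel[OF assms])

lemma cumx_xTS: assumes "valid_data D" "n \<in> nodes D" shows "cumx D (xTS D y) n i = maxlev D y n i"
  unfolding xTS_eq[OF assms(1)] by (rule cumx_tel[OF assms])

lemma feas:
  assumes "feasible D b ts x y eta u"
  shows "\<And>n i. n \<in> nodes D \<Longrightarrow> i \<in> Fac D \<Longrightarrow> 0 \<le> x n i \<and> (b \<longrightarrow> x n i \<in> \<int>)"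
    "\<And>n i j. n \<in> nodes D \<Longrightarrow> i \<in> Fac D \<Longrightarrow> j \<in> Cus D \<Longrightarrow> 0 \<le> y n i j"
    "\<And>n. n \<in> nodes D \<Longrightarrow> n \<noteq> root D \<Longrightarrow> 0 \<le> u n"
    "\<And>n j. n \<in> nodes D \<Longrightarrow> j \<in> Cus D \<Longrightarrow> (\<Sum>i\<in>Fac D. y n i j) = dem D n j"
    "\<And>n i. n \<in> nodes D \<Longrightarrow> i \<in> Fac D \<Longrightarrow> BY D y n i \<le> cumx D x n i"
    "\<And>n. n \<in> nodes D \<Longrightarrow> n \<noteq> root D \<Longrightarrow>
        u n + eta (par D n) \<ge> (\<Sum>i\<in>Fac D. fcost D (per D n) i * cumx D x n i)
                              + (\<Sum>i\<in>Fac D. \<Sum>j\<in>Cus D. ccost D (per D n) i j * y n i j)"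
    "\<And>m n i. ts \<Longrightarrow> m \<in> nodes D \<Longrightarrow> n \<in> nodes D \<Longrightarrow> per D m = per D n \<Longrightarrow> i \<in> Fac D \<Longrightarrow> x m i = x n i"
  using assms unfolding feasible_def by blast+

lemma cumx_nonneg: assumes "valid_data D" "feasible D b ts x y eta u" "n \<in> nodes D" "i \<in> Fac D"
  shows "0 \<le> cumx D x n i"
  unfolding cumx_def using path_sub[OF assms(1,3)] feas(1)[OF assms(2) _ assms(4)] by (intro sum_nonneg) auto

lemma cumx_path_mono:
  assumes "valid_data D" "feasible D b ts x y eta u" "n \<in> nodes D" "i \<in> Fac D"
  shows "k < per D n \<Longrightarrow> cumx D x ((par D ^^ k) n) i \<le> cumx D x n i"
proof (induction k)
  case 0 then show ?case by simp
next
  case (Suc k)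
  let ?z = "(par D ^^ k) n"
  have z: "?z \<in> nodes D" "per D ?z = per D n - k" using par_pow[OF assms(1,3)] Suc by auto
  have "?z \<noteq> root D" using z Suc.prems vd_facts(3)[OF assms(1)] by auto
  then have "cumx D x ?z i = x ?z i + cumx D x (par D ?z) i"
    "par D ?z \<in> nodes D" using cumx_par[OF assms(1) z(1)] vd_facts(5)[OF assms(1) z(1)] by auto
  moreover have "0 \<le> x ?z i" using feas(1)[OF assms(2) z(1) assms(4)] by simp
  ultimately show ?case using Suc by simp
qed

lemma cumx_level:
  assumes "valid_data D" "feasible D b True x y eta u" "i \<in> Fac D"
  shows "\<forall>m l. m \<in> nodes D \<longrightarrow> l \<in> nodes D \<longrightarrow> per D m = t \<longrightarrow> per D l = t \<longrightarrow> cumx D x m i = cumx D x l i"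
proof (induction t)
  case 0 show ?case
  proof (intro allI impI)
    fix m l assume "m \<in> nodes D" "l \<in> nodes D" "per D m = 0" "per D l = 0"
    then show "cumx D x m i = cumx D x l i" using vd_facts(4)[OF assms(1), of m] by simp
  qed
next
  case (Suc t)
  show ?case
  proof (intro allI impI)
    fix m l assume h: "m \<in> nodes D" "l \<in> nodes D" "per D m = Suc t" "per D l = Suc t"
    show "cumx D x m i = cumx D x l i"
    proof (cases "t = 0")
      case True
      then have "m = root D" "l = root D" using root_unique[OF assms(1) h(1)] root_unique[OF assms(1) h(2)] h by auto
      then show ?thesis by simp
    next
      case False
      then have nr: "m \<noteq> root D" "l \<noteq> root D" using h vd_facts(3)[OF assms(1)] by auto
      have pm: "par D m \<in> nodes D" "per D (par D m) = t" using vd_facts(5)[OF assms(1) h(1) nr(1)] h by auto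
      have pl: "par D l \<in> nodes D" "per D (par D l) = t" using vd_facts(5)[OF assms(1) h(2) nr(2)] h by auto
      have "x m i = x l i" using feas(7)[OF assms(2) _ h(1,2) _ assms(3)] h by simp
      moreover have "cumx D x (par D m) i = cumx D x (par D l) i" using Suc.IH pm pl by blast
      ultimately show ?thesis using cumx_par[OF assms(1) h(1) nr(1)] cumx_par[OF assms(1) h(2) nr(2)] by simp
    qed
  qed
qed

lemma finite_level: assumes "valid_data D" shows "finite (level D t)"
  unfolding level_def using vd_facts(1)[OF assms] by simp

lemma maxlev_le:
  assumes "valid_data D" "feasible D b True x y eta u" "n \<in> nodes D" "i \<in> Fac D"
  shows "maxlev D y n i \<le> cumx D x n i"
  unfolding maxlev_def
proof (subst Max_le_iff)
  show "finite ((\<lambda>m. Max ((\<lambda>l. BY D y l i) ` level D (per D m))) ` path D n)" by (intro finite_imageI finite_path)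
  show "(\<lambda>m. Max ((\<lambda>l. BY D y l i) ` level D (per D m))) ` path D n \<noteq> {}" using in_path[OF assms(1,3)] by auto
  show "\<forall>a\<in>(\<lambda>m. Max ((\<lambda>l. BY D y l i) ` level D (per D m))) ` path D n. a \<le> cumx D x n i"
  proof
    fix a assume "a \<in> (\<lambda>m. Max ((\<lambda>l. BY D y l i) ` level D (per D m))) ` path D n"
    then obtain m where m: "m \<in> path D n" "a = Max ((\<lambda>l. BY D y l i) ` level D (per D m))" by auto
    then obtain k where k: "k < per D n" "m = (par D ^^ k) n" unfolding path_def by auto
    have mn: "m \<in> nodes D" using path_sub[OF assms(1,3)] m by auto
    have c1: "cumx D x m i \<le> cumx D x n i" using cumx_path_mono[OF assms k(1)] k by simp
    have "a \<le> cumx D x m i" unfolding m(2)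
    proof (subst Max_le_iff)
      show "finite ((\<lambda>l. BY D y l i) ` level D (per D m))" using finite_level[OF assms(1)] by simp
      show "(\<lambda>l. BY D y l i) ` level D (per D m) \<noteq> {}" using mn unfolding level_def by auto
      show "\<forall>a\<in>(\<lambda>l. BY D y l i) ` level D (per D m). a \<le> cumx D x m i"
      proof
        fix b assume "b \<in> (\<lambda>l. BY D y l i) ` level D (per D m)"
        then obtain l where l: "l \<in> nodes D" "per D l = per D m" "b = BY D y l i" unfolding level_def by auto
        have "b \<le> cumx D x l i" using feas(5)[OF assms(2) l(1) assms(4)] l by simp
        also have "\<dots> = cumx D x m i" using cumx_level[OF assms(1,2,4), of "per D m"] l(1,2) mn by blast
        finally show "b \<le> cumx D x m i" .
      qed
    qed
    then show "a \<le> cumx D x n i" using c1 by simp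
  qed
qed



lemma per_nonroot: assumes "valid_data D" "n \<in> nodes D" "n \<noteq> root D"
  shows "per D n \<in> {2..Tp D}"
proof -
  have p: "par D n \<in> nodes D" "per D n = per D (par D n) + 1" using vd_facts(5)[OF assms] by auto
  have "1 \<le> per D (par D n)" using vd_facts(4)[OF assms(1) p(1)] by simp
  moreover have "per D n \<le> Tp D" using vd_facts(4)[OF assms(1,2)] by simp
  ultimately show ?thesis using p(2) by simp
qed

lemma per_range: assumes "valid_data D" "n \<in> nodes D" shows "per D n \<in> {1..Tp D}"
  using vd_facts(4)[OF assms] by auto

lemma ftil_nonneg: assumes "valid_data D" "n \<in> nodes D" "i \<in> Fac D" shows "0 \<le> ftil D n i"
proof (cases "n = root D")
  case True then show ?thesis unfolding ftil_def using vd_facts(10)[OF assms(1) per_range[OF assms(1,2)] assms(3)] by simp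
next
  case False
  have "lam D (per D n) \<le> 1" using vd_facts(13)[OF assms(1) per_nonroot[OF assms(1,2) False]] by simp
  then show ?thesis unfolding ftil_def using False vd_facts(10)[OF assms(1) per_range[OF assms(1,2)] assms(3)] by simp
qed

lemma ctil_nonneg: assumes "valid_data D" "n \<in> nodes D" "i \<in> Fac D" "j \<in> Cus D" shows "0 \<le> ctil D n i j"
proof (cases "n = root D")
  case True then show ?thesis unfolding ctil_def using vd_facts(12)[OF assms(1) per_range[OF assms(1,2)] assms(3,4)] by simp
next
  case False
  have "lam D (per D n) \<le> 1" using vd_facts(13)[OF assms(1) per_nonroot[OF assms(1,2) False]] by simp
  then show ?thesis unfolding ctil_def using False vd_facts(12)[OF assms(1) per_range[OF assms(1,2)] assms(3,4)] by simp
qed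

lemma lamtil_facts: assumes "valid_data D" "n \<in> nodes D"
  shows "0 \<le> lamtil D n" "per D n = Tp D \<Longrightarrow> lamtil D n = 0"
    "per D n \<noteq> Tp D \<Longrightarrow> lamtil D n = lam D (per D n + 1)"
    "per D n \<noteq> Tp D \<Longrightarrow> per D n < Tp D"
proof -
  show "per D n = Tp D \<Longrightarrow> lamtil D n = 0" unfolding lamtil_def by simp
  show "per D n \<noteq> Tp D \<Longrightarrow> lamtil D n = lam D (per D n + 1)" unfolding lamtil_def by simp
  show "per D n \<noteq> Tp D \<Longrightarrow> per D n < Tp D" using vd_facts(4)[OF assms] by simp
  show "0 \<le> lamtil D n"
  proof (cases "per D n = Tp D")
    case True then show ?thesis unfolding lamtil_def by simp
  next
    case False
    then have "per D n + 1 \<in> {2..Tp D}" using vd_facts(4)[OF assms] by auto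
    then show ?thesis unfolding lamtil_def using False vd_facts(13)[OF assms(1)] by simp
  qed
qed

lemma children_facts: assumes "valid_data D" "m \<in> children D n"
  shows "m \<in> nodes D" "m \<noteq> root D" "par D m = n"
  using assms(2) unfolding children_def by auto

lemma finite_children: assumes "valid_data D" shows "finite (children D n)"
  unfolding children_def using vd_facts(1)[OF assms] by simp

lemma etaTS_le:
  assumes "valid_data D" "feasible D b True x y eta u" "n \<in> nodes D" "per D n < Tp D"
  shows "etaTS D y u n \<le> eta n"
  unfolding etaTS_def etaOf_def
proof (subst Max_le_iff)
  show "finite ((\<lambda>m. (\<Sum>i\<in>Fac D. fcost D (per D m) i * (\<Sum>l\<in>path D m. xTS D y l i))
                  + (\<Sum>i\<in>Fac D. \<Sum>j\<in>Cus D. ccost D (per D m) i j * y m i j) - u m) ` children D n)"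
    by (intro finite_imageI finite_children[OF assms(1)])
  show "(\<lambda>m. (\<Sum>i\<in>Fac D. fcost D (per D m) i * (\<Sum>l\<in>path D m. xTS D y l i))
                  + (\<Sum>i\<in>Fac D. \<Sum>j\<in>Cus D. ccost D (per D m) i j * y m i j) - u m) ` children D n \<noteq> {}"
    using vd_facts(6)[OF assms(1,3,4)] by simp
  show "\<forall>a\<in>(\<lambda>m. (\<Sum>i\<in>Fac D. fcost D (per D m) i * (\<Sum>l\<in>path D m. xTS D y l i))
                  + (\<Sum>i\<in>Fac D. \<Sum>j\<in>Cus D. ccost D (per D m) i j * y m i j) - u m) ` children D n. a \<le> eta n"
  proof
    fix a assume "a \<in> (\<lambda>m. (\<Sum>i\<in>Fac D. fcost D (per D m) i * (\<Sum>l\<in>path D m. xTS D y l i))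
                  + (\<Sum>i\<in>Fac D. \<Sum>j\<in>Cus D. ccost D (per D m) i j * y m i j) - u m) ` children D n"
    then obtain m where m: "m \<in> children D n" "a = (\<Sum>i\<in>Fac D. fcost D (per D m) i * (\<Sum>l\<in>path D m. xTS D y l i))
                  + (\<Sum>i\<in>Fac D. \<Sum>j\<in>Cus D. ccost D (per D m) i j * y m i j) - u m" by auto
    note mf = children_facts[OF assms(1) m(1)]
    have "(\<Sum>i\<in>Fac D. fcost D (per D m) i * (\<Sum>l\<in>path D m. xTS D y l i))
        \<le> (\<Sum>i\<in>Fac D. fcost D (per D m) i * cumx D x m i)"
    proof (rule sum_mono)
      fix i assume i: "i \<in> Fac D"
      have "(\<Sum>l\<in>path D m. xTS D y l i) = maxlev D y m i" using cumx_xTS[OF assms(1) mf(1)] unfolding cumx_def by simp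
      also have "\<dots> \<le> cumx D x m i" by (rule maxlev_le[OF assms(1,2) mf(1) i])
      finally show "fcost D (per D m) i * (\<Sum>l\<in>path D m. xTS D y l i) \<le> fcost D (per D m) i * cumx D x m i"
        by (rule mult_left_mono[OF _ vd_facts(10)[OF assms(1) per_range[OF assms(1) mf(1)] i]])
    qed
    then show "a \<le> eta n" using m(2) feas(6)[OF assms(2) mf(1,2), unfolded mf(3)] by linarith
  qed
qed

lemma obj_TS_le:
  assumes "valid_data D" "feasible D b True x y eta u"
  shows "obj D (xTS D y) y (etaTS D y u) u \<le> obj D x y eta u"
  unfolding obj_def
proof (rule sum_mono)
  fix n assume n: "n \<in> nodes D"
  have A: "(\<Sum>i\<in>Fac D. ftil D n i * cumx D (xTS D y) n i) \<le> (\<Sum>i\<in>Fac D. ftil D n i * cumx D x n i)"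
  proof (rule sum_mono)
    fix i assume i: "i \<in> Fac D"
    show "ftil D n i * cumx D (xTS D y) n i \<le> ftil D n i * cumx D x n i"
      unfolding cumx_xTS[OF assms(1) n] using maxlev_le[OF assms n i] ftil_nonneg[OF assms(1) n i]
      by (rule mult_left_mono)
  qed
  have L: "lamtil D n * etaTS D y u n \<le> lamtil D n * eta n"
  proof (cases "per D n = Tp D")
    case True then show ?thesis using lamtil_facts(2)[OF assms(1) n] by simp
  next
    case False
    show ?thesis using etaTS_le[OF assms n lamtil_facts(4)[OF assms(1) n False]] lamtil_facts(1)[OF assms(1) n]
      by (rule mult_left_mono)
  qed
  have p0: "0 \<le> pr D n" using vd_facts(7)[OF assms(1) n] by simp
  show "pr D n * ((\<Sum>i\<in>Fac D. ftil D n i * cumx D (xTS D y) n i) +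
          (\<Sum>i\<in>Fac D. \<Sum>j\<in>Cus D. ctil D n i j * y n i j) + lamtil D n * etaTS D y u n + alptil D n * u n)
       \<le> pr D n * ((\<Sum>i\<in>Fac D. ftil D n i * cumx D x n i) +
          (\<Sum>i\<in>Fac D. \<Sum>j\<in>Cus D. ctil D n i j * y n i j) + lamtil D n * eta n + alptil D n * u n)"
    by (rule mult_left_mono[OF add_mono[OF add_mono[OF add_mono[OF A order_refl] L] order_refl] p0])
qed



lemma BY_nonneg: assumes "valid_data D" "feasible D b ts x y eta u" "n \<in> nodes D" "i \<in> Fac D"
  shows "0 \<le> BY D y n i"
proof -
  have "0 < cap D (per D n) i" using vd_facts(11)[OF assms(1) per_range[OF assms(1,3)] assms(4)] .
  moreover have "0 \<le> (\<Sum>j\<in>Cus D. y n i j)" using feas(2)[OF assms(2,3,4)] by (intro sum_nonneg) simp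
  ultimately show ?thesis unfolding BY_def by simp
qed

lemma maxceil_fin: "finite ((\<lambda>m. ceilBY D y m i) ` path D n)"
  by (intro finite_imageI finite_path)

lemma maxceil_ne: assumes "valid_data D" "n \<in> nodes D" shows "(\<lambda>m. ceilBY D y m i) ` path D n \<noteq> {}"
  using in_path[OF assms] by auto

lemma maxceil_int: assumes "valid_data D" "n \<in> nodes D" shows "maxceil D y n i \<in> \<int>"
proof -
  have "maxceil D y n i \<in> (\<lambda>m. ceilBY D y m i) ` path D n"
    unfolding maxceil_def using Max_in[OF maxceil_fin maxceil_ne[OF assms]] .
  then show ?thesis unfolding ceilBY_def by auto
qed

lemma maxceil_ge: assumes "valid_data D" "n \<in> nodes D" shows "ceilBY D y n i \<le> maxceil D y n i"
  unfolding maxceil_def using in_path[OF assms] by (intro Max_ge maxceil_fin) auto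

lemma maxceil_mono: assumes "valid_data D" "n \<in> nodes D" "n \<noteq> root D"
  shows "maxceil D y (par D n) i \<le> maxceil D y n i"
proof -
  have pn: "par D n \<in> nodes D" using vd_facts(5)[OF assms] by simp
  show ?thesis unfolding maxceil_def
  proof (rule Max_mono[OF _ maxceil_ne[OF assms(1) pn] maxceil_fin])
    show "(\<lambda>m. ceilBY D y m i) ` path D (par D n) \<subseteq> (\<lambda>m. ceilBY D y m i) ` path D n"
      using path_par[OF assms] by (intro image_mono) blast
  qed
qed

lemma MS_feasible:
  assumes "valid_data D" "feasible D b ts x y eta u"
  shows "feasible D True False (xMS D y) y (etaMS D y u) u"
  unfolding feasible_def
proof (intro conjI ballI impI)
  fix n i assume n: "n \<in> nodes D" and i: "i \<in> Fac D"
  show "0 \<le> xMS D y n i"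
  proof (cases "n = root D")
    case True
    have "0 \<le> BY D y n i" by (rule BY_nonneg[OF assms n i])
    then show ?thesis using True unfolding xMS_def ceilBY_def by simp
  next
    case False then show ?thesis unfolding xMS_def using maxceil_mono[OF assms(1) n False] by simp
  qed
  show "xMS D y n i \<in> \<int>"
  proof (cases "n = root D")
    case True then show ?thesis unfolding xMS_def ceilBY_def by simp
  next
    case False
    have "par D n \<in> nodes D" using vd_facts(5)[OF assms(1) n False] by simp
    then show ?thesis unfolding xMS_def using False maxceil_int[OF assms(1) n] maxceil_int[OF assms(1)] by simp
  qed
  show "BY D y n i \<le> cumx D (xMS D y) n i"
    unfolding cumx_xMS[OF assms(1) n] using maxceil_ge[OF assms(1) n, of y i] unfolding ceilBY_def
    by (meson le_of_int_ceiling order_trans)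
next
  fix n i j assume "n \<in> nodes D" "i \<in> Fac D" "j \<in> Cus D"
  then show "0 \<le> y n i j" using feas(2)[OF assms(2)] by blast
next
  fix n assume "n \<in> nodes D" "n \<noteq> root D" then show "0 \<le> u n" using feas(3)[OF assms(2)] by blast
next
  fix n j assume "n \<in> nodes D" "j \<in> Cus D" then show "(\<Sum>i\<in>Fac D. y n i j) = dem D n j" using feas(4)[OF assms(2)] by blast
next
  fix n assume n: "n \<in> nodes D" and nr: "n \<noteq> root D"
  have "n \<in> children D (par D n)" unfolding children_def using n nr by simp
  then have "(\<Sum>i\<in>Fac D. fcost D (per D n) i * (\<Sum>l\<in>path D n. xMS D y l i))
                              + (\<Sum>i\<in>Fac D. \<Sum>j\<in>Cus D. ccost D (per D n) i j * y n i j)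
                              - u n \<le> etaMS D y u (par D n)"
    unfolding etaMS_def etaOf_def by (intro Max_ge finite_imageI finite_children[OF assms(1)]) auto
  then show "(\<Sum>i\<in>Fac D. fcost D (per D n) i * cumx D (xMS D y) n i) +
          (\<Sum>i\<in>Fac D. \<Sum>j\<in>Cus D. ccost D (per D n) i j * y n i j) \<le> u n + etaMS D y u (par D n)"
    unfolding cumx_def by linarith
next
  fix m n i assume "False" then show "xMS D y m i = xMS D y n i" by simp
qed



lemma leaves_split:
  assumes "valid_data D"
  shows "(\<Sum>n\<in>nodes D. pr D n * lamtil D n * e n) = (\<Sum>n\<in>nodes D - leaves D. pr D n * lam D (per D n + 1) * e n)"
proof (rule sum.mono_neutral_cong_right[OF vd_facts(1)[OF assms]])
  show "nodes D - leaves D \<subseteq> nodes D" by blast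
  show "\<forall>i\<in>nodes D - (nodes D - leaves D). pr D i * lamtil D i * e i = 0"
  proof
    fix n assume "n \<in> nodes D - (nodes D - leaves D)"
    then have "n \<in> nodes D" "per D n = Tp D" unfolding leaves_def level_def by auto
    then show "pr D n * lamtil D n * e n = 0" using lamtil_facts(2)[OF assms] by simp
  qed
  fix n assume "n \<in> nodes D - leaves D"
  then have "n \<in> nodes D" "per D n \<noteq> Tp D" unfolding leaves_def level_def by auto
  then show "pr D n * lamtil D n * e n = pr D n * lam D (per D n + 1) * e n" using lamtil_facts(3)[OF assms] by simp
qed

lemma eta_regroup:
  assumes "valid_data D"
  shows "(\<Sum>n\<in>nodes D. pr D n * lamtil D n * e n)
       = (\<Sum>m\<in>nodes D - {root D}. pr D m * lam D (per D m) * e (par D m))"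
proof -
  have fin: "finite (nodes D)" using vd_facts(1)[OF assms] .
  have step: "pr D n * lam D (per D n + 1) * e n = (\<Sum>m\<in>children D n. pr D m * lam D (per D m) * e (par D m))"
    if n: "n \<in> nodes D - leaves D" for n
  proof -
    have nn: "n \<in> nodes D" "per D n < Tp D" using n vd_facts(4)[OF assms, of n] unfolding leaves_def level_def by auto
    have "(\<Sum>m\<in>children D n. pr D m * lam D (per D m) * e (par D m))
        = (\<Sum>m\<in>children D n. pr D m * (lam D (per D n + 1) * e n))"
    proof (rule sum.cong)
      fix m assume m: "m \<in> children D n"
      note mf = children_facts[OF assms m]
      have "per D m = per D n + 1" using vd_facts(5)[OF assms mf(1,2)] mf(3) by simp
      then show "pr D m * lam D (per D m) * e (par D m) = pr D m * (lam D (per D n + 1) * e n)"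
        using mf(3) by simp
    qed simp
    also have "\<dots> = (\<Sum>m\<in>children D n. pr D m) * (lam D (per D n + 1) * e n)"
      by (simp add: sum_distrib_right)
    also have "\<dots> = pr D n * lam D (per D n + 1) * e n" using vd_facts(9)[OF assms nn] by simp
    finally show ?thesis by simp
  qed
  have grp: "(\<Sum>n\<in>nodes D - leaves D. (\<Sum>m\<in>{x \<in> nodes D - {root D}. par D x = n}. pr D m * lam D (per D m) * e (par D m)))
      = (\<Sum>m\<in>nodes D - {root D}. pr D m * lam D (per D m) * e (par D m))"
  proof (rule sum.group)
    show "finite (nodes D - {root D})" "finite (nodes D - leaves D)" using fin by auto
    show "par D ` (nodes D - {root D}) \<subseteq> nodes D - leaves D"
    proof
      fix z assume "z \<in> par D ` (nodes D - {root D})"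
      then obtain m where m: "m \<in> nodes D" "m \<noteq> root D" "z = par D m" by auto
      have "par D m \<in> nodes D" "per D m = per D (par D m) + 1" using vd_facts(5)[OF assms m(1,2)] by auto
      moreover have "per D m \<le> Tp D" using vd_facts(4)[OF assms m(1)] by simp
      ultimately show "z \<in> nodes D - leaves D" using m(3) unfolding leaves_def level_def by auto
    qed
  qed
  have ch: "{x \<in> nodes D - {root D}. par D x = n} = children D n" for n unfolding children_def by auto
  show ?thesis
    unfolding leaves_split[OF assms] grp[symmetric] ch
    by (rule sum.cong[OF refl]) (rule step)
qed

lemma u_regroup:
  assumes "valid_data D"
  shows "(\<Sum>n\<in>nodes D. pr D n * alptil D n * e n)
       = (\<Sum>m\<in>nodes D - {root D}. pr D m * (lam D (per D m) / (1 - alp D (per D m))) * e m)"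
  unfolding sum.remove[OF vd_facts(1,2)[OF assms]]
  by (simp add: alptil_def)

lemma obj_nonneg:
  assumes "valid_data D" "feasible D b ts x y eta u"
  shows "0 \<le> obj D x y eta u"
proof -
  let ?A = "\<lambda>n. (\<Sum>i\<in>Fac D. ftil D n i * cumx D x n i) + (\<Sum>i\<in>Fac D. \<Sum>j\<in>Cus D. ctil D n i j * y n i j)"
  have split: "obj D x y eta u = (\<Sum>n\<in>nodes D. pr D n * ?A n) + (\<Sum>n\<in>nodes D. pr D n * lamtil D n * eta n)
      + (\<Sum>n\<in>nodes D. pr D n * alptil D n * u n)"
    unfolding obj_def sum.distrib[symmetric] by (rule sum.cong) (simp_all add: algebra_simps)
  have A: "0 \<le> (\<Sum>n\<in>nodes D. pr D n * ?A n)"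
  proof (rule sum_nonneg)
    fix n assume n: "n \<in> nodes D"
    have "0 \<le> (\<Sum>i\<in>Fac D. ftil D n i * cumx D x n i)"
      using ftil_nonneg[OF assms(1) n] cumx_nonneg[OF assms n] by (intro sum_nonneg mult_nonneg_nonneg) auto
    moreover have "0 \<le> (\<Sum>i\<in>Fac D. \<Sum>j\<in>Cus D. ctil D n i j * y n i j)"
      using ctil_nonneg[OF assms(1) n] feas(2)[OF assms(2) n] by (intro sum_nonneg mult_nonneg_nonneg) auto
    ultimately show "0 \<le> pr D n * ?A n" using vd_facts(7)[OF assms(1) n] by simp
  qed
  have EU: "(\<Sum>n\<in>nodes D. pr D n * lamtil D n * eta n) + (\<Sum>n\<in>nodes D. pr D n * alptil D n * u n)
     = (\<Sum>m\<in>nodes D - {root D}. pr D m * lam D (per D m) * eta (par D m)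
          + pr D m * (lam D (per D m) / (1 - alp D (per D m))) * u m)"
    unfolding eta_regroup[OF assms(1)] u_regroup[OF assms(1)] sum.distrib ..
  have "0 \<le> (\<Sum>m\<in>nodes D - {root D}. pr D m * lam D (per D m) * eta (par D m)
          + pr D m * (lam D (per D m) / (1 - alp D (per D m))) * u m)"
  proof (rule sum_nonneg)
    fix m assume "m \<in> nodes D - {root D}"
    then have m: "m \<in> nodes D" "m \<noteq> root D" by auto
    have pr: "0 < pr D m" using vd_facts(7)[OF assms(1) m(1)] .
    have la: "0 \<le> lam D (per D m)" "0 < alp D (per D m)" "alp D (per D m) < 1"
      using vd_facts(13)[OF assms(1) per_nonroot[OF assms(1) m]] by auto
    have u0: "0 \<le> u m" using feas(3)[OF assms(2) m] .
    have F: "0 \<le> (\<Sum>i\<in>Fac D. fcost D (per D m) i * cumx D x m i)"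
      using vd_facts(10)[OF assms(1) per_range[OF assms(1) m(1)]] cumx_nonneg[OF assms m(1)]
      by (intro sum_nonneg mult_nonneg_nonneg) auto
    have C: "0 \<le> (\<Sum>i\<in>Fac D. \<Sum>j\<in>Cus D. ccost D (per D m) i j * y m i j)"
      using vd_facts(12)[OF assms(1) per_range[OF assms(1) m(1)]] feas(2)[OF assms(2) m(1)]
      by (intro sum_nonneg mult_nonneg_nonneg) auto
    have eu: "0 \<le> eta (par D m) + u m" using feas(6)[OF assms(2) m] F C by linarith
    have "u m \<le> u m / (1 - alp D (per D m))"
      using la u0 by (simp add: le_divide_eq mult_left_le)
    then have "lam D (per D m) * u m \<le> lam D (per D m) * (u m / (1 - alp D (per D m)))"
      using la(1) by (rule mult_left_mono)
    moreover have "0 \<le> lam D (per D m) * (eta (par D m) + u m)" using la(1) eu by simp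
    ultimately have "0 \<le> lam D (per D m) * eta (par D m) + lam D (per D m) * (u m / (1 - alp D (per D m)))"
      by (simp add: distrib_left)
    then have "0 \<le> pr D m * (lam D (per D m) * eta (par D m) + lam D (per D m) * (u m / (1 - alp D (per D m))))"
      using pr by simp
    then show "0 \<le> pr D m * lam D (per D m) * eta (par D m)
          + pr D m * (lam D (per D m) / (1 - alp D (per D m))) * u m"
      by (simp add: algebra_simps)
  qed
  then show ?thesis using split A EU by linarith
qed



lemma pr_root: assumes "valid_data D" shows "pr D (root D) = 1"
proof -
  have "1 \<in> {1..Tp D}" using vd_facts(14)[OF assms] by simp
  then have "(\<Sum>n\<in>level D 1. pr D n) = 1" by (rule vd_facts(8)[OF assms])
  then show ?thesis unfolding level_root[OF assms] by simp
qed

lemma arith_aux: "(A1::real) - A2 = S \<Longrightarrow> p * (A1 + C + l * e1 + U) - p * (A2 + C + l * e2 + U) = p * S + p * l * (e1 - e2)"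
  by (simp add: algebra_simps)

lemma LB1_eq:
  assumes "valid_data D"
  shows "obj D (xTS D y) y (etaTS D y u) u - obj D (xMS D y) y (etaMS D y u) u = LB1 D y u"
proof -
  have 1: "obj D (xTS D y) y (etaTS D y u) u - obj D (xMS D y) y (etaMS D y u) u
     = (\<Sum>n\<in>nodes D. pr D n * (\<Sum>i\<in>Fac D. ftil D n i * (maxlev D y n i - maxceil D y n i))
          + pr D n * lamtil D n * (etaTS D y u n - etaMS D y u n))"
    unfolding obj_def sum_subtractf[symmetric]
  proof (rule sum.cong[OF refl])
    fix n assume n: "n \<in> nodes D"
    have "(\<Sum>i\<in>Fac D. ftil D n i * cumx D (xTS D y) n i) - (\<Sum>i\<in>Fac D. ftil D n i * cumx D (xMS D y) n i)
        = (\<Sum>i\<in>Fac D. ftil D n i * (maxlev D y n i - maxceil D y n i))"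
      unfolding sum_subtractf[symmetric] cumx_xTS[OF assms n] cumx_xMS[OF assms n]
      by (simp add: right_diff_distrib)
    then show "pr D n * ((\<Sum>i\<in>Fac D. ftil D n i * cumx D (xTS D y) n i) +
          (\<Sum>i\<in>Fac D. \<Sum>j\<in>Cus D. ctil D n i j * y n i j) + lamtil D n * etaTS D y u n + alptil D n * u n) -
         pr D n * ((\<Sum>i\<in>Fac D. ftil D n i * cumx D (xMS D y) n i) +
          (\<Sum>i\<in>Fac D. \<Sum>j\<in>Cus D. ctil D n i j * y n i j) + lamtil D n * etaMS D y u n + alptil D n * u n)
       = pr D n * (\<Sum>i\<in>Fac D. ftil D n i * (maxlev D y n i - maxceil D y n i))
          + pr D n * lamtil D n * (etaTS D y u n - etaMS D y u n)"
      by (rule arith_aux)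
  qed
  have 2: "(\<Sum>n\<in>nodes D. pr D n * (\<Sum>i\<in>Fac D. ftil D n i * (maxlev D y n i - maxceil D y n i)))
     = (\<Sum>i\<in>Fac D. fcost D (per D (root D)) i * (BY D y (root D) i - ceilBY D y (root D) i))
     + (\<Sum>n\<in>nodes D - {root D}. pr D n * (1 - lam D (per D n)) *
        (\<Sum>i\<in>Fac D. fcost D (per D n) i * (maxlev D y n i - maxceil D y n i)))"
    unfolding sum.remove[OF vd_facts(1,2)[OF assms]]
  proof (rule arg_cong2[where f="(+)"])
    show "pr D (root D) * (\<Sum>i\<in>Fac D. ftil D (root D) i * (maxlev D y (root D) i - maxceil D y (root D) i))
      = (\<Sum>i\<in>Fac D. fcost D (per D (root D)) i * (BY D y (root D) i - ceilBY D y (root D) i))"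
      unfolding pr_root[OF assms] maxlev_root[OF assms] maxceil_root[OF assms] ftil_def by simp
    show "(\<Sum>n\<in>nodes D - {root D}. pr D n * (\<Sum>i\<in>Fac D. ftil D n i * (maxlev D y n i - maxceil D y n i)))
      = (\<Sum>n\<in>nodes D - {root D}. pr D n * (1 - lam D (per D n)) *
        (\<Sum>i\<in>Fac D. fcost D (per D n) i * (maxlev D y n i - maxceil D y n i)))"
      by (rule sum.cong[OF refl]) (simp add: ftil_def sum_distrib_left mult.assoc)
  qed
  show ?thesis
    unfolding 1 sum.distrib 2 leaves_split[OF assms, of "\<lambda>n. etaTS D y u n - etaMS D y u n"] LB1_def
    by (simp add: mult.assoc)
qed

lemma TS_nonempty:
  assumes "valid_data D" "feasible D False True x y eta u"
  shows "{obj D x y eta u | x y eta u. feasible D True True x y eta u} \<noteq> {}"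
proof -
  define x' where "x' = (\<lambda>n i. real_of_int \<lceil>x n i\<rceil>)"
  define u' where "u' = (\<lambda>n. u n + (\<Sum>i\<in>Fac D. fcost D (per D n) i * cumx D x' n i)
                                 - (\<Sum>i\<in>Fac D. fcost D (per D n) i * cumx D x n i))"
  have cx: "cumx D x n i \<le> cumx D x' n i" for n i
    unfolding cumx_def x'_def by (intro sum_mono) simp
  have fx: "(\<Sum>i\<in>Fac D. fcost D (per D n) i * cumx D x n i) \<le> (\<Sum>i\<in>Fac D. fcost D (per D n) i * cumx D x' n i)"
    if n: "n \<in> nodes D" for n
    using vd_facts(10)[OF assms(1) per_range[OF assms(1) n]] cx by (intro sum_mono mult_left_mono) auto
  have "feasible D True True x' y eta u'"
    unfolding feasible_def
  proof (intro conjI ballI impI)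
    fix n i assume n: "n \<in> nodes D" and i: "i \<in> Fac D"
    show "0 \<le> x' n i" unfolding x'_def using feas(1)[OF assms(2) n i] by simp
    show "x' n i \<in> \<int>" unfolding x'_def by simp
    show "BY D y n i \<le> cumx D x' n i" using feas(5)[OF assms(2) n i] cx[of n i] by simp
  next
    fix n i j assume "n \<in> nodes D" "i \<in> Fac D" "j \<in> Cus D"
    then show "0 \<le> y n i j" using feas(2)[OF assms(2)] by blast
  next
    fix n assume n: "n \<in> nodes D" "n \<noteq> root D"
    then show "0 \<le> u' n" unfolding u'_def using feas(3)[OF assms(2) n] fx[OF n(1)] by simp
  next
    fix n j assume "n \<in> nodes D" "j \<in> Cus D" then show "(\<Sum>i\<in>Fac D. y n i j) = dem D n j" using feas(4)[OF assms(2)] by blast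
  next
    fix n assume n: "n \<in> nodes D" "n \<noteq> root D"
    show "(\<Sum>i\<in>Fac D. fcost D (per D n) i * cumx D x' n i) +
          (\<Sum>i\<in>Fac D. \<Sum>j\<in>Cus D. ccost D (per D n) i j * y n i j) \<le> u' n + eta (par D n)"
      unfolding u'_def using feas(6)[OF assms(2) n] by linarith
  next
    fix m n i assume h: "m \<in> nodes D" "n \<in> nodes D" "per D m = per D n" "i \<in> Fac D"
    have "x m i = x n i" by (rule feas(7)[OF assms(2) TrueI h])
    then show "x' m i = x' n i" unfolding x'_def by simp
  qed
  then show ?thesis by blast
qed

lemma feas_weaken: "feasible D True ts x y eta u \<Longrightarrow> feasible D False ts x y eta u"
  unfolding feasible_def by blast

theorem corollary1:
  fixes D :: "'v fl_data"
    and x :: "'v \<Rightarrow> nat \<Rightarrow> real" and y :: "'v \<Rightarrow> nat \<Rightarrow> nat \<Rightarrow> real"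
    and eta :: "'v \<Rightarrow> real" and u :: "'v \<Rightarrow> real"
  assumes "valid_data D"
    and "feasible D False True x y eta u"
    and "\<forall>x' y' eta' u'. feasible D False True x' y' eta' u' \<longrightarrow>
           obj D x y eta u \<le> obj D x' y' eta' u'"
  shows "VMS D \<ge> LB1 D y u"
proof -
  have ts: "obj D x y eta u \<le> zTS D"
    unfolding zTS_def
  proof (rule cInf_greatest[OF TS_nonempty[OF assms(1,2)]])
    fix z assume "z \<in> {obj D x y eta u | x y eta u. feasible D True True x y eta u}"
    then obtain x' y' eta' u' where "z = obj D x' y' eta' u'" "feasible D True True x' y' eta' u'" by blast
    then show "obj D x y eta u \<le> z" using assms(3) feas_weaken by blast
  qed
  have ms: "zMS D \<le> obj D (xMS D y) y (etaMS D y u) u"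
    unfolding zMS_def
  proof (rule cInf_lower)
    show "obj D (xMS D y) y (etaMS D y u) u \<in> {obj D x y eta u | x y eta u. feasible D True False x y eta u}"
      using MS_feasible[OF assms(1,2)] by blast
    show "bdd_below {obj D x y eta u | x y eta u. feasible D True False x y eta u}"
    proof (rule bdd_belowI)
      fix z assume "z \<in> {obj D x y eta u | x y eta u. feasible D True False x y eta u}"
      then show "0 \<le> z" using obj_nonneg[OF assms(1)] by blast
    qed
  qed
  have "obj D (xTS D y) y (etaTS D y u) u \<le> obj D x y eta u" by (rule obj_TS_le[OF assms(1,2)])
  then show ?thesis unfolding VMS_def using ts ms LB1_eq[OF assms(1), of y u] by linarith
qed

end
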